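(* Consider two candidates $P,Q$. Let $A$ be the voters preferring $P$ (with strengths $\alpha_i=d(i,Q)/d(i,P)$) and $B$ the voters preferring $Q$ (with strengths $\beta_j=d(j,P)/d(j,Q)$). If $$\sum_{i\in A}\frac{\sqrt2\alpha_i-1}{\alpha_i+1}\ \ge\ \sum_{j\in B,\ \beta_j>\sqrt2}\frac{\beta_j-\sqrt2}{\beta_j-1}-\sum_{j\in B,\ \beta_j\le\sqrt2}\frac{\sqrt2-\beta_j}{\beta_j+1},$$ then $SC(P)\le\sqrt2\,SC(Q)$.
   Context: Voters $N=A\cup B$ and candidates $P,Q$ are points of an arbitrary metric space $(X,d)$, where $A=\{i: d(i,P)\le d(i,Q)\}$ and $B=N\setminus A$ consists of voters with $d(j,Q)<d(j,P)$ (or, more generally, a partition into voters preferring $P$ and voters preferring $Q$ consistent with the distances). $SC(Y)=\sum_{i\in N}d(i,Y)$. *)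

theory Defs
  imports Complex_Main
begin

definition SC :: "'v set \<Rightarrow> ('v \<Rightarrow> 'a::metric_space) \<Rightarrow> 'a \<Rightarrow> real" where
  "SC N loc Y = (\<Sum>i\<in>N. dist (loc i) Y)"

definition strengthP :: "('v \<Rightarrow> 'a::metric_space) \<Rightarrow> 'a \<Rightarrow> 'a \<Rightarrow> 'v \<Rightarrow> real" where
  "strengthP loc P Q i = dist (loc i) Q / dist (loc i) P"

definition strengthQ :: "('v \<Rightarrow> 'a::metric_space) \<Rightarrow> 'a \<Rightarrow> 'a \<Rightarrow> 'v \<Rightarrow> real" where
  "strengthQ loc P Q j = dist (loc j) P / dist (loc j) Q"

end

theory Submission
  imports Defs
begin

lemma s2: "sqrt 2 > (1::real)" "sqrt 2 * sqrt 2 = (2::real)" by auto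

lemma boundA:
  fixes p q D :: real
  assumes "p > 0" "p \<le> q" "D \<le> p + q" "D \<ge> 0"
  shows "p - sqrt 2 * q \<le> - (D * ((sqrt 2 * (q/p) - 1) / (q/p + 1)))"
proof -
  define a where "a = q/p"
  have q: "q = a * p" using assms(1) by (simp add: a_def)
  have a1: "a \<ge> 1" using assms by (simp add: a_def)
  have c: "sqrt 2 * a - 1 > 0" using s2 a1
    by (smt (verit) mult_le_cancel_left1)
  have "D / (a+1) \<le> p" using assms a1 q by (simp add: divide_le_eq algebra_simps)
  hence "(sqrt 2 * a - 1) * (D/(a+1)) \<le> (sqrt 2 * a - 1) * p"
    using c by (intro mult_left_mono) auto
  moreover have "D * ((sqrt 2 * a - 1) / (a + 1)) = (sqrt 2 * a - 1) * (D/(a+1))" by simp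
  ultimately have "p - sqrt 2 * q \<le> - (D * ((sqrt 2 * a - 1) / (a + 1)))" unfolding q by (simp add: algebra_simps)
  thus ?thesis by (simp add: a_def)
qed

lemma boundB1:
  fixes p q D :: real
  assumes "q > 0" "p \<le> q + D" "p/q > sqrt 2"
  shows "p - sqrt 2 * q \<le> D * ((p/q - sqrt 2) / (p/q - 1))"
proof -
  define b where "b = p/q"
  have p: "p = b * q" using assms(1) by (simp add: b_def)
  have b1: "b - 1 > 0" using s2 assms(3) b_def by linarith
  have c: "b - sqrt 2 > 0" using assms b_def by simp
  have "q \<le> D/(b-1)" using b1 assms(2) p by (simp add: le_divide_eq algebra_simps)
  hence "(b - sqrt 2) * q \<le> (b - sqrt 2) * (D/(b-1))" using c by (intro mult_left_mono) auto
  moreover have "D * ((b - sqrt 2) / (b - 1)) = (b - sqrt 2) * (D/(b-1))" by simp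
  ultimately have "p - sqrt 2 * q \<le> D * ((b - sqrt 2) / (b - 1))" unfolding p by (simp add: algebra_simps)
  thus ?thesis by (simp add: b_def)
qed

lemma boundB2:
  fixes p q D :: real
  assumes "q > 0" "D \<le> p + q" "p/q \<le> sqrt 2" "p \<ge> 0"
  shows "p - sqrt 2 * q \<le> - (D * ((sqrt 2 - p/q) / (p/q + 1)))"
proof -
  define b where "b = p/q"
  have p: "p = b * q" using assms(1) by (simp add: b_def)
  have b0: "b \<ge> 0" using assms b_def by simp
  have c: "sqrt 2 - b \<ge> 0" using assms b_def by simp
  have "D/(b+1) \<le> q" using b0 assms(2) p by (simp add: divide_le_eq algebra_simps)
  hence "(sqrt 2 - b) * (D/(b+1)) \<le> (sqrt 2 - b) * q" using c by (intro mult_left_mono) auto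
  moreover have "D * ((sqrt 2 - b) / (b + 1)) = (sqrt 2 - b) * (D/(b+1))" by simp
  ultimately have "p - sqrt 2 * q \<le> - (D * ((sqrt 2 - b) / (b + 1)))" unfolding p by (simp add: algebra_simps)
  thus ?thesis by (simp add: b_def)
qed

theorem mainTheorem11:
  fixes N A B :: "'v set" and loc :: "'v \<Rightarrow> 'a::metric_space" and P Q :: 'a
  assumes "finite N"
    and "A \<union> B = N" and "A \<inter> B = {}"
    and "\<And>i. i \<in> A \<Longrightarrow> dist (loc i) P \<le> dist (loc i) Q"
    and "\<And>j. j \<in> B \<Longrightarrow> dist (loc j) Q \<le> dist (loc j) P"
    and "\<And>i. i \<in> A \<Longrightarrow> dist (loc i) P > 0"
    and "\<And>j. j \<in> B \<Longrightarrow> dist (loc j) Q > 0"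
    and "(\<Sum>i\<in>A. (sqrt 2 * strengthP loc P Q i - 1) / (strengthP loc P Q i + 1))
         \<ge> (\<Sum>j\<in>{j\<in>B. strengthQ loc P Q j > sqrt 2}.
                (strengthQ loc P Q j - sqrt 2) / (strengthQ loc P Q j - 1))
           - (\<Sum>j\<in>{j\<in>B. strengthQ loc P Q j \<le> sqrt 2}.
                (sqrt 2 - strengthQ loc P Q j) / (strengthQ loc P Q j + 1))"
  shows "SC N loc P \<le> sqrt 2 * SC N loc Q"
proof -
  define D where "D = dist P Q"
  define f where "f i = dist (loc i) P - sqrt 2 * dist (loc i) Q" for i
  define B1 where "B1 = {j\<in>B. strengthQ loc P Q j > sqrt 2}"
  define B2 where "B2 = {j\<in>B. strengthQ loc P Q j \<le> sqrt 2}"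
  define SA where "SA = (\<Sum>i\<in>A. (sqrt 2 * strengthP loc P Q i - 1) / (strengthP loc P Q i + 1))"
  define S1 where "S1 = (\<Sum>j\<in>B1. (strengthQ loc P Q j - sqrt 2) / (strengthQ loc P Q j - 1))"
  define S2 where "S2 = (\<Sum>j\<in>B2. (sqrt 2 - strengthQ loc P Q j) / (strengthQ loc P Q j + 1))"
  have D0: "D \<ge> 0" by (simp add: D_def)
  have fA: "finite A" "finite B" using assms(1,2) by (auto intro: finite_subset)
  have fB: "finite B1" "finite B2" using fA by (auto simp: B1_def B2_def)
  have tri: "D \<le> dist (loc i) P + dist (loc i) Q" for i
    unfolding D_def by (metis dist_commute dist_triangle)
  have tri2: "dist (loc i) P \<le> dist (loc i) Q + D" for i
    unfolding D_def using dist_triangle[of "loc i" P Q] by (simp add: dist_commute)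
  have hA: "(\<Sum>i\<in>A. f i) \<le> (\<Sum>i\<in>A. - (D * ((sqrt 2 * strengthP loc P Q i - 1) / (strengthP loc P Q i + 1))))"
    by (rule sum_mono) (unfold f_def strengthP_def, rule boundA, use assms tri D0 in auto)
  have h1: "(\<Sum>i\<in>B1. f i) \<le> (\<Sum>i\<in>B1. D * ((strengthQ loc P Q i - sqrt 2) / (strengthQ loc P Q i - 1)))"
  proof (rule sum_mono)
    fix i assume i: "i \<in> B1"
    have "dist (loc i) P / dist (loc i) Q > sqrt 2" using i by (simp add: B1_def strengthQ_def)
    from boundB1[OF assms(7)[of i] tri2[of i] this] i show "f i \<le> D * ((strengthQ loc P Q i - sqrt 2) / (strengthQ loc P Q i - 1))"
      by (simp add: f_def strengthQ_def B1_def)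
  qed
  have h2: "(\<Sum>i\<in>B2. f i) \<le> (\<Sum>i\<in>B2. - (D * ((sqrt 2 - strengthQ loc P Q i) / (strengthQ loc P Q i + 1))))"
  proof (rule sum_mono)
    fix i assume i: "i \<in> B2"
    have "dist (loc i) P / dist (loc i) Q \<le> sqrt 2" using i by (simp add: B2_def strengthQ_def)
    from boundB2[OF assms(7)[of i] tri[of i] this] i show "f i \<le> - (D * ((sqrt 2 - strengthQ loc P Q i) / (strengthQ loc P Q i + 1)))"
      by (simp add: f_def strengthQ_def B2_def)
  qed
  have Bsplit: "(\<Sum>i\<in>B. f i) = (\<Sum>i\<in>B1. f i) + (\<Sum>i\<in>B2. f i)"
  proof -
    have "B = B1 \<union> B2" "B1 \<inter> B2 = {}" by (auto simp: B1_def B2_def)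
    thus ?thesis using fB sum.union_disjoint by metis
  qed
  have Nsplit: "(\<Sum>i\<in>N. f i) = (\<Sum>i\<in>A. f i) + (\<Sum>i\<in>B. f i)"
    using sum.union_disjoint[OF fA assms(3)] assms(2) by metis
  have "(\<Sum>i\<in>N. f i) \<le> D * (S1 - S2 - SA)"
    using hA h1 h2 Bsplit Nsplit
    unfolding SA_def S1_def S2_def sum_negf sum_distrib_left[symmetric] by (simp add: algebra_simps)
  also have "\<dots> \<le> 0" using assms(8) D0 unfolding SA_def S1_def S2_def B1_def B2_def
    by (simp add: mult_nonneg_nonpos)
  finally have "(\<Sum>i\<in>N. f i) \<le> 0" .
  thus ?thesis unfolding f_def SC_def sum_subtractf sum_distrib_left by simp
qed

end
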